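(* Let $\chi_1,\dots,\chi_n,\hbar,q_1,\dots,q_n$ be elements of a commutative ring in which all $1-q_i/q_j$ ($i\neq j$) and $q_j$ are invertible (e.g. indeterminates over $\mathbb C$ in the field of rational functions). Let $M(\chi)$ be the $n\times n$ matrix with $M_{ii}=\chi_i$ and $M_{ij}=\frac{\hbar}{1-q_i/q_j}$ for $i\ne j$, and define $\mathcal E_k(\chi)$ by $\det(y\,1_n+M(\chi))=y^n+\sum_{k=1}^n\mathcal E_k(\chi)y^{n-k}$. Then for every $1\le k\le n$, $$\mathcal E_k(\chi)=\sum_K\sum_\pi J(\pi)V(\pi),$$ where $K$ ranges over all $k$-element subsets of $\{1,\dots,n\}$, $\pi$ ranges over all matchings of $K$ (involutions $\pi:K\to K$, $\pi^2=\mathrm{id}$), and $$J(\pi)=\prod_{i:\pi(i)=i}\chi_i,\qquad V(\pi)=\prod_{i<j,\ \pi(i)=j}\frac{\hbar^2q_iq_j}{(q_i-q_j)^2}.$$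
   Context: In the paper this is applied with $\chi_i=D_{-\mathbf e_i}+\hbar\sum_{a<i}\frac{q_a/q_i}{1-q_a/q_i}-\hbar\sum_{b>i}\frac{q_i/q_b}{1-q_i/q_b}$ in $QH^*_{\hat{\mathbb T}}(T^*\mathcal B)$ for $GL(n)$, but the identity is a formal identity in the stated entries. *)

theory Defs
  imports "Jordan_Normal_Form.Determinant" "HOL-Computational_Algebra.Polynomial"
begin

definition rinv :: "'a::comm_ring_1 \<Rightarrow> 'a" where
  "rinv x = (THE y. x * y = 1)"

text \<open>The matrix M(chi), indices 0..n-1 (standing for 1..n).\<close>
definition Mchi :: "nat \<Rightarrow> 'a::comm_ring_1 \<Rightarrow> (nat \<Rightarrow> 'a) \<Rightarrow> (nat \<Rightarrow> 'a) \<Rightarrow> 'a mat" where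
  "Mchi n hbar q chi = mat n n (\<lambda>(i,j). if i = j then chi i
        else hbar * rinv (1 - q i * rinv (q j)))"

definition detpoly :: "nat \<Rightarrow> 'a::comm_ring_1 \<Rightarrow> (nat \<Rightarrow> 'a) \<Rightarrow> (nat \<Rightarrow> 'a) \<Rightarrow> 'a poly" where
  "detpoly n hbar q chi = det (mat n n (\<lambda>(i,j).
      (if i = j then [:0, 1:] else 0) + [: Mchi n hbar q chi $$ (i,j) :]))"

definition Ecoef :: "nat \<Rightarrow> 'a::comm_ring_1 \<Rightarrow> (nat \<Rightarrow> 'a) \<Rightarrow> (nat \<Rightarrow> 'a) \<Rightarrow> nat \<Rightarrow> 'a" where
  "Ecoef n hbar q chi k = coeff (detpoly n hbar q chi) (n - k)"

definition matchings :: "nat set \<Rightarrow> (nat \<Rightarrow> nat) set" where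
  "matchings K = {\<pi>. (\<forall>i\<in>K. \<pi> i \<in> K \<and> \<pi> (\<pi> i) = i) \<and> (\<forall>i. i \<notin> K \<longrightarrow> \<pi> i = i)}"

definition Jw :: "(nat \<Rightarrow> 'a::comm_ring_1) \<Rightarrow> nat set \<Rightarrow> (nat \<Rightarrow> nat) \<Rightarrow> 'a" where
  "Jw chi K \<pi> = (\<Prod>i\<in>{i\<in>K. \<pi> i = i}. chi i)"

definition Vw :: "'a::comm_ring_1 \<Rightarrow> (nat \<Rightarrow> 'a) \<Rightarrow> nat set \<Rightarrow> (nat \<Rightarrow> nat) \<Rightarrow> 'a" where
  "Vw hbar q K \<pi> = (\<Prod>i\<in>{i\<in>K. i < \<pi> i}.
      hbar^2 * q i * q (\<pi> i) * rinv ((q i - q (\<pi> i))^2))"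

end

theory Submission
  imports Defs
begin


definition detS :: "(nat \<Rightarrow> nat \<Rightarrow> 'b::comm_ring_1) \<Rightarrow> nat set \<Rightarrow> 'b" where
  "detS f S = (\<Sum>p\<in>{p. p permutes S}. of_int (sign p) * (\<Prod>i\<in>S. f i (p i)))"

lemma permutes_fix_eq:
  assumes "i \<in> S"
  shows "{p. p permutes S \<and> p i = i} = {p. p permutes (S - {i})}"
proof -
  have "(p permutes S \<and> p i = i) \<longleftrightarrow> p permutes (S - {i})" for p
  proof
    assume p: "p permutes S \<and> p i = i"
    show "p permutes S - {i}" using p unfolding permutes_def by auto
  next
    assume p: "p permutes S - {i}"
    show "p permutes S \<and> p i = i" using permutes_subset[OF p] permutes_not_in[OF p] by auto
  qed
  then show ?thesis by auto
qed

lemma detS_insert: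
  fixes f :: "nat \<Rightarrow> nat \<Rightarrow> 'b::comm_ring_1"
  assumes fin: "finite S" and aS: "a \<notin> S"
    and hc: "\<And>i j. i \<in> S \<Longrightarrow> j \<in> S \<Longrightarrow> i \<noteq> j \<Longrightarrow> f i a * f a j = f i j * (c * (g i - g j))"
  shows "detS f (insert a S) = f a a * detS f S - (\<Sum>i\<in>S. f a i * f i a * detS f (S - {i}))"
proof -
  let ?P = "{p. p permutes S}"
  let ?T = "\<lambda>b q. of_int (sign (transpose a b \<circ> q)) * (\<Prod>x\<in>insert a S. f x ((transpose a b \<circ> q) x))"
  let ?Q = "\<lambda>q i. (\<Prod>x\<in>S - {i}. f x (q x))"
  have finP: "finite ?P" using finite_permutations[OF fin] by simp
  have 1: "detS f (insert a S) = (\<Sum>b\<in>insert a S. \<Sum>q\<in>?P. ?T b q)"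
    unfolding detS_def by (rule sum_over_permutations_insert[OF fin aS])
  also have "\<dots> = (\<Sum>q\<in>?P. ?T a q) + (\<Sum>b\<in>S. \<Sum>q\<in>?P. ?T b q)"
    using fin aS by simp
  also have "(\<Sum>q\<in>?P. ?T a q) = f a a * detS f S"
  proof -
    have "?T a q = f a a * (of_int (sign q) * (\<Prod>i\<in>S. f i (q i)))" if q: "q permutes S" for q
    proof -
      have "q a = a" using permutes_not_in[OF q aS] .
      then show ?thesis using fin aS by (simp add: algebra_simps)
    qed
    then show ?thesis unfolding detS_def sum_distrib_left by (intro sum.cong) auto
  qed
  also have "(\<Sum>b\<in>S. \<Sum>q\<in>?P. ?T b q) = (\<Sum>q\<in>?P. \<Sum>i\<in>S. - (of_int (sign q) *
        (if q i = i then f a i * f i a * ?Q q i else 0)))"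
  proof -
    have "(\<Sum>b\<in>S. \<Sum>q\<in>?P. ?T b q) = (\<Sum>q\<in>?P. \<Sum>b\<in>S. ?T b q)" by (rule sum.swap)
    also have "\<dots> = (\<Sum>q\<in>?P. \<Sum>i\<in>S. - (of_int (sign q) *
        (if q i = i then f a i * f i a * ?Q q i else 0)))"
    proof (rule sum.cong[OF refl])
      fix q assume "q \<in> ?P"
      then have q: "q permutes S" by simp
      have qa: "q a = a" using permutes_not_in[OF q aS] .
      have qS: "\<And>x. x \<in> S \<Longrightarrow> q x \<in> S" using permutes_in_image[OF q] by simp
      have injq: "inj_on q S" using permutes_inj_on[OF q] .
      have imq: "q ` S = S" using permutes_image[OF q] .
      have "(\<Sum>b\<in>S. ?T b q) = (\<Sum>i\<in>S. ?T (q i) q)"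
        using sum.reindex[OF injq, of "\<lambda>b. ?T b q"] imq by simp
      also have "\<dots> = (\<Sum>i\<in>S. - (of_int (sign q) * (f a (q i) * f i a * ?Q q i)))"
      proof (rule sum.cong[OF refl])
        fix i assume i: "i \<in> S"
        have qi: "q i \<in> S" using qS[OF i] .
        have ne: "a \<noteq> q i" using qi aS by auto
        have sg: "sign (transpose a (q i) \<circ> q) = - sign q"
          using sign_compose[OF permutation_swap_id permutes_imp_permutation[OF fin q]]
          by (simp add: sign_swap_id ne)
        have pr1: "(\<Prod>x\<in>insert a S. f x ((transpose a (q i) \<circ> q) x)) =
            f a (q i) * (\<Prod>x\<in>S. f x (transpose a (q i) (q x)))"
          using fin aS qa by simp
        have pr2: "(\<Prod>x\<in>S. f x (transpose a (q i) (q x))) = f i a * ?Q q i"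
        proof -
          have "(\<Prod>x\<in>S. f x (transpose a (q i) (q x))) = f i (transpose a (q i) (q i)) *
              (\<Prod>x\<in>S - {i}. f x (transpose a (q i) (q x)))"
            using prod.remove[OF fin i] .
          also have "(\<Prod>x\<in>S - {i}. f x (transpose a (q i) (q x))) = ?Q q i"
          proof (rule prod.cong[OF refl])
            fix x assume x: "x \<in> S - {i}"
            have "q x \<noteq> q i" using injq x i by (auto dest: inj_onD)
            moreover have "q x \<noteq> a" using qS[of x] x aS by auto
            ultimately show "f x (transpose a (q i) (q x)) = f x (q x)" by simp
          qed
          finally show ?thesis by simp
        qed
        show "?T (q i) q = - (of_int (sign q) * (f a (q i) * f i a * ?Q q i))"
          unfolding sg pr1 pr2 by (simp add: algebra_simps)
      qed
      also have "\<dots> = (\<Sum>i\<in>S. - (of_int (sign q) *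
        (if q i = i then f a i * f i a * ?Q q i else 0)))
        + (\<Sum>i\<in>S. - (of_int (sign q) * (c * (\<Prod>x\<in>S. f x (q x)) * (g i - g (q i)))))"
        unfolding sum.distrib[symmetric]
      proof (rule sum.cong[OF refl])
        fix i assume i: "i \<in> S"
        show "- (of_int (sign q) * (f a (q i) * f i a * ?Q q i)) =
          - (of_int (sign q) * (if q i = i then f a i * f i a * ?Q q i else 0)) +
          - (of_int (sign q) * (c * (\<Prod>x\<in>S. f x (q x)) * (g i - g (q i))))"
        proof (cases "q i = i")
          case True then show ?thesis by simp
        next
          case False
          have h: "f i a * f a (q i) = f i (q i) * (c * (g i - g (q i)))"
            using hc[OF i qS[OF i]] False by simp
          have pp: "(\<Prod>x\<in>S. f x (q x)) = f i (q i) * ?Q q i" using prod.remove[OF fin i] .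
          have "f a (q i) * f i a * ?Q q i = (f i a * f a (q i)) * ?Q q i" by (simp only: ac_simps)
          also have "\<dots> = (f i (q i) * (c * (g i - g (q i)))) * ?Q q i" by (simp only: h)
          also have "\<dots> = c * (f i (q i) * ?Q q i) * (g i - g (q i))" by (simp only: ac_simps)
          finally show ?thesis using False unfolding pp by simp
        qed
      qed
      also have "(\<Sum>i\<in>S. - (of_int (sign q) * (c * (\<Prod>x\<in>S. f x (q x)) * (g i - g (q i))))) = 0"
      proof -
        have "(\<Sum>i\<in>S. g (q i)) = (\<Sum>i\<in>S. g i)"
          using sum.reindex[OF injq, of g] imq by simp
        then have "(\<Sum>i\<in>S. g i - g (q i)) = 0" by (simp add: sum_subtractf)
        then show ?thesis
          by (simp add: sum_negf sum_distrib_left[symmetric] mult.assoc[symmetric])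
      qed
      finally show "(\<Sum>b\<in>S. ?T b q) = (\<Sum>i\<in>S. - (of_int (sign q) *
        (if q i = i then f a i * f i a * ?Q q i else 0)))" by (simp only: add_0_right)
    qed
    finally show ?thesis .
  qed
  also have "(\<Sum>q\<in>?P. \<Sum>i\<in>S. - (of_int (sign q) *
        (if q i = i then f a i * f i a * ?Q q i else 0))) =
      - (\<Sum>i\<in>S. f a i * f i a * detS f (S - {i}))"
  proof -
    have "(\<Sum>q\<in>?P. \<Sum>i\<in>S. - (of_int (sign q) *
        (if q i = i then f a i * f i a * ?Q q i else 0))) =
      (\<Sum>i\<in>S. - (\<Sum>q\<in>?P. (if q i = i then f a i * f i a * (of_int (sign q) * ?Q q i) else 0)))"
    proof -
      have "(\<Sum>q\<in>?P. \<Sum>i\<in>S. - (of_int (sign q) *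
        (if q i = i then f a i * f i a * ?Q q i else 0))) =
        (\<Sum>q\<in>?P. \<Sum>i\<in>S. - (if q i = i then f a i * f i a * (of_int (sign q) * ?Q q i) else 0))"
        by (intro sum.cong refl) (simp add: ac_simps)
      also have "\<dots> = (\<Sum>i\<in>S. \<Sum>q\<in>?P. - (if q i = i then f a i * f i a * (of_int (sign q) * ?Q q i) else 0))"
        by (rule sum.swap)
      also have "\<dots> = (\<Sum>i\<in>S. - (\<Sum>q\<in>?P. (if q i = i then f a i * f i a * (of_int (sign q) * ?Q q i) else 0)))"
        by (simp only: sum_negf)
      finally show ?thesis .
    qed
    also have "\<dots> = (\<Sum>i\<in>S. - (f a i * f i a * detS f (S - {i})))"
    proof (rule sum.cong[OF refl])
      fix i assume i: "i \<in> S"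
      have "(\<Sum>q\<in>?P. (if q i = i then f a i * f i a * (of_int (sign q) * ?Q q i) else 0)) =
         (\<Sum>q\<in>{q \<in> ?P. q i = i}. f a i * f i a * (of_int (sign q) * ?Q q i))"
        by (rule sum.inter_filter[OF finP, symmetric])
      also have "{q \<in> ?P. q i = i} = {p. p permutes (S - {i})}"
        using permutes_fix_eq[OF i] by simp
      finally show "- (\<Sum>q\<in>?P. (if q i = i then f a i * f i a * (of_int (sign q) * ?Q q i) else 0))
          = - (f a i * f i a * detS f (S - {i}))"
        unfolding detS_def by (simp add: sum_distrib_left)
    qed
    finally show ?thesis by (simp add: sum_negf)
  qed
  finally show ?thesis by simp
qed


definition wt :: "(nat \<Rightarrow> nat \<Rightarrow> 'b::comm_ring_1) \<Rightarrow> nat set \<Rightarrow> (nat \<Rightarrow> nat) \<Rightarrow> 'b" where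
  "wt f S \<pi> = (\<Prod>i\<in>{i\<in>S. \<pi> i = i}. f i i) * (\<Prod>i\<in>{i\<in>S. i < \<pi> i}. - (f i (\<pi> i) * f (\<pi> i) i))"

definition HS :: "(nat \<Rightarrow> nat \<Rightarrow> 'b::comm_ring_1) \<Rightarrow> nat set \<Rightarrow> 'b" where
  "HS f S = (\<Sum>\<pi>\<in>matchings S. wt f S \<pi>)"

lemma matchings_permutes: "\<pi> \<in> matchings S \<Longrightarrow> \<pi> permutes S"
  unfolding matchings_def permutes_def
proof (clarsimp)
  assume h1: "\<forall>i\<in>S. \<pi> i \<in> S \<and> \<pi> (\<pi> i) = i" and h2: "\<forall>i. i \<notin> S \<longrightarrow> \<pi> i = i"
  fix y
  show "\<exists>!x. \<pi> x = y"
  proof (cases "y \<in> S")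
    case True
    show ?thesis
    proof (rule ex1I[of _ "\<pi> y"])
      show "\<pi> (\<pi> y) = y" using h1 True by auto
      fix x assume x: "\<pi> x = y"
      have "x \<in> S" using x h2 True by metis
      then show "x = \<pi> y" using x h1 by auto
    qed
  next
    case False
    show ?thesis
    proof (rule ex1I[of _ y])
      show "\<pi> y = y" using h2 False by auto
      fix x assume x: "\<pi> x = y"
      have "x \<notin> S" using x h1 False by auto
      then show "x = y" using x h2 by auto
    qed
  qed
qed

lemma finite_matchings: "finite S \<Longrightarrow> finite (matchings S)"
  by (rule finite_subset[OF _ finite_permutations[of S]]) (auto dest: matchings_permutes)

lemma matchings_empty: "matchings {} = {id}"
  unfolding matchings_def by (auto simp: fun_eq_iff)

lemma HS_empty: "HS f {} = 1"
  unfolding HS_def matchings_empty wt_def by simp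

lemma detS_empty: "detS f {} = 1"
  unfolding detS_def by (simp add: permutes_empty)

lemma HS_insert:
  fixes f :: "nat \<Rightarrow> nat \<Rightarrow> 'b::comm_ring_1"
  assumes fin: "finite S" and aS: "a \<notin> S"
  shows "HS f (insert a S) = f a a * HS f S + (\<Sum>i\<in>S. (- (f i a * f a i)) * HS f (S - {i}))"
proof -
  let ?M = "matchings (insert a S)"
  have finM: "finite ?M" using finite_matchings fin by simp
  have "HS f (insert a S) = (\<Sum>b\<in>insert a S. \<Sum>\<pi>\<in>{\<pi>. \<pi> \<in> ?M \<and> \<pi> a = b}. wt f (insert a S) \<pi>)"
    unfolding HS_def
    by (rule sum.group[symmetric, OF finM]) (use fin in \<open>auto simp: matchings_def\<close>)
  also have "\<dots> = (\<Sum>\<pi>\<in>{\<pi>. \<pi> \<in> ?M \<and> \<pi> a = a}. wt f (insert a S) \<pi>) +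
     (\<Sum>i\<in>S. \<Sum>\<pi>\<in>{\<pi>. \<pi> \<in> ?M \<and> \<pi> a = i}. wt f (insert a S) \<pi>)"
    using fin aS by simp
  also have "(\<Sum>\<pi>\<in>{\<pi>. \<pi> \<in> ?M \<and> \<pi> a = a}. wt f (insert a S) \<pi>) = f a a * HS f S"
  proof -
    have eq: "{\<pi>. \<pi> \<in> ?M \<and> \<pi> a = a} = matchings S"
      using aS unfolding matchings_def by auto
    have "wt f (insert a S) \<pi> = f a a * wt f S \<pi>" if p: "\<pi> \<in> matchings S" for \<pi>
    proof -
      have pa: "\<pi> a = a" using p aS unfolding matchings_def by auto
      have e1: "{i\<in>insert a S. \<pi> i = i} = insert a {i\<in>S. \<pi> i = i}" using pa by auto
      have e2: "{i\<in>insert a S. i < \<pi> i} = {i\<in>S. i < \<pi> i}" using pa by auto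
      show ?thesis unfolding wt_def e1 e2 using fin aS by (simp add: ac_simps)
    qed
    then show ?thesis unfolding eq HS_def sum_distrib_left by (intro sum.cong) auto
  qed
  also have "(\<Sum>i\<in>S. \<Sum>\<pi>\<in>{\<pi>. \<pi> \<in> ?M \<and> \<pi> a = i}. wt f (insert a S) \<pi>) =
      (\<Sum>i\<in>S. (- (f i a * f a i)) * HS f (S - {i}))"
  proof (rule sum.cong[OF refl])
    fix i assume i: "i \<in> S"
    have ai: "a \<noteq> i" using i aS by auto
    let ?e = "\<lambda>\<pi>'. \<pi>'(i := a, a := i)"
    let ?r = "\<lambda>\<pi>. \<pi>(i := i, a := a)"
    have "(\<Sum>\<pi>\<in>{\<pi>. \<pi> \<in> ?M \<and> \<pi> a = i}. wt f (insert a S) \<pi>) =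
        (\<Sum>\<pi>'\<in>matchings (S - {i}). wt f (insert a S) (?e \<pi>'))"
    proof (rule sum.reindex_bij_witness[of _ ?e ?r])
      fix \<pi> assume "\<pi> \<in> {\<pi>. \<pi> \<in> ?M \<and> \<pi> a = i}"
      then have p: "\<pi> \<in> ?M" and pa: "\<pi> a = i" by auto
      have pi: "\<pi> i = a" using p pa unfolding matchings_def by force
      show "?e (?r \<pi>) = \<pi>" using pa pi ai by (auto simp: fun_eq_iff)
      show "?r \<pi> \<in> matchings (S - {i})"
        unfolding matchings_def
      proof (rule CollectI, rule conjI; intro ballI allI impI)
        fix x assume x: "x \<in> S - {i}"
        have px: "\<pi> x \<in> insert a S" "\<pi> (\<pi> x) = x" using p x unfolding matchings_def by auto
        have "\<pi> x \<noteq> a" using px pa x by auto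
        moreover have "\<pi> x \<noteq> i" using px pi x aS by auto
        ultimately show "(?r \<pi>) x \<in> S - {i} \<and> (?r \<pi>) ((?r \<pi>) x) = x"
          using px x ai aS by auto
      next
        fix x assume x: "x \<notin> S - {i}"
        show "(?r \<pi>) x = x" using x p unfolding matchings_def by auto
      qed
    next
      fix \<pi>' assume p: "\<pi>' \<in> matchings (S - {i})"
      have pi: "\<pi>' i = i" and pa: "\<pi>' a = a" using p aS unfolding matchings_def by auto
      show "?r (?e \<pi>') = \<pi>'" using pi pa by (auto simp: fun_eq_iff)
      show "?e \<pi>' \<in> {\<pi>. \<pi> \<in> ?M \<and> \<pi> a = i}"
      proof (simp add: ai, unfold matchings_def, rule CollectI, rule conjI; intro ballI allI impI)
        fix x assume x: "x \<in> insert a S"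
        show "(?e \<pi>') x \<in> insert a S \<and> (?e \<pi>') ((?e \<pi>') x) = x"
        proof (cases "x = a \<or> x = i")
          case True then show ?thesis using ai i by auto
        next
          case False
          then have x': "x \<in> S - {i}" using x by auto
          have "\<pi>' x \<in> S - {i}" "\<pi>' (\<pi>' x) = x" using p x' unfolding matchings_def by auto
          then show ?thesis using False aS by auto
        qed
      next
        fix x assume x: "x \<notin> insert a S"
        then show "(?e \<pi>') x = x" using p i unfolding matchings_def by auto
      qed
    next
      fix \<pi> assume "\<pi> \<in> {\<pi>. \<pi> \<in> ?M \<and> \<pi> a = i}"
      then have p: "\<pi> \<in> ?M" and pa: "\<pi> a = i" by auto
      have pi: "\<pi> i = a" using p pa unfolding matchings_def by force
      show "wt f (insert a S) (?e (?r \<pi>)) = wt f (insert a S) \<pi>"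
        using pa pi ai by (auto intro!: arg_cong[where f="wt f (insert a S)"] simp: fun_eq_iff)
    qed
    also have "\<dots> = (\<Sum>\<pi>'\<in>matchings (S - {i}). (- (f i a * f a i)) * wt f (S - {i}) \<pi>')"
    proof (rule sum.cong[OF refl])
      fix \<pi>' assume p: "\<pi>' \<in> matchings (S - {i})"
      have pi: "\<pi>' i = i" and pa: "\<pi>' a = a" using p aS unfolding matchings_def by auto
      have pS: "\<And>x. x \<in> S - {i} \<Longrightarrow> \<pi>' x \<in> S - {i}" using p unfolding matchings_def by auto
      have finS': "finite {x\<in>S - {i}. x < \<pi>' x}" using fin by simp
      have e1: "{x\<in>insert a S. (?e \<pi>') x = x} = {x\<in>S - {i}. \<pi>' x = x}"
        using ai aS by auto
      have e2: "{x\<in>insert a S. x < (?e \<pi>') x} = insert (min a i) {x\<in>S - {i}. x < \<pi>' x}"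
        using ai i aS by (auto simp: min_def)
      have nin: "min a i \<notin> {x\<in>S - {i}. x < \<pi>' x}" using aS by (auto simp: min_def)
      have pr: "(\<Prod>x\<in>{x\<in>S - {i}. x < \<pi>' x}. - (f x ((?e \<pi>') x) * f ((?e \<pi>') x) x)) =
          (\<Prod>x\<in>{x\<in>S - {i}. x < \<pi>' x}. - (f x (\<pi>' x) * f (\<pi>' x) x))"
      proof (rule prod.cong[OF refl])
        fix x assume "x \<in> {x\<in>S - {i}. x < \<pi>' x}"
        then have x: "x \<in> S - {i}" by auto
        have "\<pi>' x \<noteq> a" "\<pi>' x \<noteq> i" using pS[OF x] aS by auto
        then show "- (f x ((?e \<pi>') x) * f ((?e \<pi>') x) x) = - (f x (\<pi>' x) * f (\<pi>' x) x)"
          using x aS by auto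
      qed
      have m: "- (f (min a i) ((?e \<pi>') (min a i)) * f ((?e \<pi>') (min a i)) (min a i)) = - (f i a * f a i)"
        using ai by (cases "a < i") (auto simp: min_def mult.commute)
      show "wt f (insert a S) (?e \<pi>') = (- (f i a * f a i)) * wt f (S - {i}) \<pi>'"
        unfolding wt_def e1 e2 prod.insert[OF finS' nin] pr m by (simp only: ac_simps)
    qed
    also have "\<dots> = (- (f i a * f a i)) * HS f (S - {i})"
      unfolding HS_def by (simp add: sum_distrib_left)
    finally show "(\<Sum>\<pi>\<in>{\<pi>. \<pi> \<in> ?M \<and> \<pi> a = i}. wt f (insert a S) \<pi>) = (- (f i a * f a i)) * HS f (S - {i})" .
  qed
  finally show ?thesis .
qed

lemma detS_HS:
  fixes f :: "nat \<Rightarrow> nat \<Rightarrow> 'b::comm_ring_1"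
  assumes finU: "finite U"
    and hc: "\<And>a. a \<in> U \<Longrightarrow> \<exists>c g. \<forall>i\<in>U. \<forall>j\<in>U. i \<noteq> j \<and> i \<noteq> a \<and> j \<noteq> a \<longrightarrow>
        f i a * f a j = f i j * (c * (g i - g j))"
  shows "S \<subseteq> U \<Longrightarrow> detS f S = HS f S"
proof (induction "card S" arbitrary: S rule: less_induct)
  case less
  show ?case
  proof (cases "S = {}")
    case True then show ?thesis by (simp add: HS_empty detS_empty)
  next
    case False
    then obtain a where a: "a \<in> S" by auto
    define S' where "S' = S - {a}"
    have finS: "finite S" using less.prems finU finite_subset by auto
    have S: "S = insert a S'" and aS': "a \<notin> S'" and fin': "finite S'"
      using a finS unfolding S'_def by auto
    have aU: "a \<in> U" using a less.prems by auto
    obtain c g where cg: "\<forall>i\<in>U. \<forall>j\<in>U. i \<noteq> j \<and> i \<noteq> a \<and> j \<noteq> a \<longrightarrow>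
        f i a * f a j = f i j * (c * (g i - g j))" using hc[OF aU] by blast
    have hc': "f i a * f a j = f i j * (c * (g i - g j))" if "i \<in> S'" "j \<in> S'" "i \<noteq> j" for i j
      using cg that less.prems aS' unfolding S by auto
    have cardS': "card S' < card S" unfolding S'_def by (rule card_Diff1_less[OF finS a])
    have IH1: "detS f S' = HS f S'"
      using less.hyps[OF cardS'] less.prems unfolding S'_def by auto
    have IH2: "detS f (S' - {i}) = HS f (S' - {i})" if i: "i \<in> S'" for i
    proof -
      have "card (S' - {i}) < card S" by (rule less_trans[OF card_Diff1_less[OF fin' i] cardS'])
      then show ?thesis using less.hyps less.prems unfolding S'_def by auto
    qed
    have "detS f S = f a a * detS f S' - (\<Sum>i\<in>S'. f a i * f i a * detS f (S' - {i}))"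
      unfolding S by (rule detS_insert[where c=c and g=g, OF fin' aS' hc'])
    also have "\<dots> = f a a * HS f S' + (\<Sum>i\<in>S'. (- (f i a * f a i)) * HS f (S' - {i}))"
      using IH1 IH2 by (simp add: sum_negf[symmetric] ac_simps)
    also have "\<dots> = HS f S" unfolding S by (rule HS_insert[OF fin' aS', symmetric])
    finally show ?thesis .
  qed
qed



lemma rinv_eq:
  fixes x :: "'a::comm_ring_1"
  assumes "x * y = 1" shows "rinv x = y"
  unfolding rinv_def
proof (rule the_equality)
  show "x * y = 1" by fact
  fix z assume z: "x * z = 1"
  have "z = z * (x * y)" using assms by simp
  also have "\<dots> = (x * z) * y" by (simp add: ac_simps)
  finally show "z = y" using z by simp
qed

lemma rinv_unit:
  fixes x :: "'a::comm_ring_1"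
  assumes "x dvd 1" shows "x * rinv x = 1"
proof -
  obtain y where "1 = x * y" using assms by (auto elim: dvdE)
  then show ?thesis using rinv_eq[of x y] by simp
qed

lemma cyc_id:
  fixes A B C x y z w :: "'a::comm_ring_1"
  assumes hx: "(B - A)*x = 1" and hy: "(C - B)*y = 1" and hz: "(C-A)*z = 1" and hw: "(B - C)*w = 1"
  shows "x*y = z*(x - w)"
proof -
  have w: "w = - y"
  proof -
    have "w = w * ((C-B)*y)" using hy by simp
    also have "\<dots> = - (((B - C) * w) * y)" by (simp add: algebra_simps)
    finally show ?thesis using hw by simp
  qed
  have "x*y = x*y*((C-A)*z)" using hz by simp
  also have "\<dots> = z*(((C-B)*y)*x + ((B-A)*x)*y)" by (simp add: algebra_simps)
  also have "\<dots> = z*(x+y)" using hx hy by simp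
  finally show ?thesis using w by simp
qed

lemma pair_id:
  fixes A C z w :: "'a::comm_ring_1"
  assumes hz: "(C-A)*z = 1" and hw: "(A - C)*w = 1"
  shows "- (z * w) = w^2"
proof -
  have "z = z * ((A - C)*w)" using hw by simp
  also have "\<dots> = - (((C - A) * z) * w)" by (simp add: algebra_simps)
  finally have "z = - w" using hz by simp
  then show ?thesis by (simp add: power2_eq_square)
qed


lemma const_prod_poly:
  fixes f :: "nat \<Rightarrow> 'a::comm_ring_1"
  shows "finite X \<Longrightarrow> (\<Prod>i\<in>X. [:f i:]) = [:\<Prod>i\<in>X. f i:]"
  by (induction X rule: finite_induct) (auto simp: mult_to_poly)

lemma Y_prod:
  fixes p :: "nat \<Rightarrow> nat"
  assumes "finite B"
  shows "(\<Prod>i\<in>B. (if i = p i then c else 0 :: 'b::comm_semiring_1)) =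
    (if (\<forall>i\<in>B. p i = i) then c ^ card B else 0)"
proof (cases "\<forall>i\<in>B. p i = i")
  case True
  then have "(\<Prod>i\<in>B. (if i = p i then c else 0 :: 'b)) = (\<Prod>i\<in>B. c)" by (intro prod.cong) auto
  then show ?thesis using True by simp
next
  case False
  then obtain j where j: "j \<in> B" "p j \<noteq> j" by auto
  then have "(\<Prod>i\<in>B. (if i = p i then c else 0 :: 'b)) = 0"
    by (intro prod_zero[OF assms] bexI[of _ j]) auto
  then show ?thesis using j by auto
qed

lemma permutes_sub_eq:
  assumes "X \<subseteq> A"
  shows "{p. p permutes A \<and> (\<forall>i\<in>A - X. p i = i)} = {p. p permutes X}"
proof -
  have "(p permutes A \<and> (\<forall>i\<in>A - X. p i = i)) \<longleftrightarrow> p permutes X" for p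
  proof
    assume p: "p permutes A \<and> (\<forall>i\<in>A - X. p i = i)"
    show "p permutes X" using p unfolding permutes_def by blast
  next
    assume p: "p permutes X"
    show "p permutes A \<and> (\<forall>i\<in>A - X. p i = i)"
      using permutes_subset[OF p assms] permutes_not_in[OF p] by auto
  qed
  then show ?thesis by auto
qed

lemma det_expand:
  fixes f :: "nat \<Rightarrow> nat \<Rightarrow> 'a::comm_ring_1"
  shows "(\<Sum>p\<in>{p. p permutes {0..<n}}. signof p *
           (\<Prod>i\<in>{0..<n}. [:f i (p i):] + (if i = p i then [:0, 1:] else 0))) =
         (\<Sum>X\<in>Pow {0..<n}. monom (detS f X) (n - card X))"
proof -
  let ?A = "{0..<n::nat}"
  let ?P = "{p. p permutes ?A}"
  have finP: "finite ?P" using finite_permutations[of ?A] by simp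
  have step: "signof p * (\<Prod>i\<in>?A. [:f i (p i):] + (if i = p i then [:0, 1:] else 0)) =
     (\<Sum>X\<in>Pow ?A. (if (\<forall>i\<in>?A - X. p i = i) then
        monom (of_int (sign p) * (\<Prod>i\<in>X. f i (p i))) (n - card X) else 0))" for p
  proof -
    have "signof p * (\<Prod>i\<in>?A. [:f i (p i):] + (if i = p i then [:0, 1:] else 0)) =
      (\<Sum>X\<in>Pow ?A. signof p * ((\<Prod>i\<in>X. [:f i (p i):]) * (\<Prod>i\<in>?A - X. (if i = p i then [:0, 1:] else 0))))"
      by (simp add: prod_add sum_distrib_left)
    also have "\<dots> = (\<Sum>X\<in>Pow ?A. (if (\<forall>i\<in>?A - X. p i = i) then
        monom (of_int (sign p) * (\<Prod>i\<in>X. f i (p i))) (n - card X) else 0))"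
    proof (rule sum.cong[OF refl])
      fix X assume X: "X \<in> Pow ?A"
      then have finX: "finite X" and XA: "X \<subseteq> ?A" using finite_subset by auto
      have cd: "card (?A - X) = n - card X" using XA by (simp add: card_Diff_subset finX)
      show "signof p * ((\<Prod>i\<in>X. [:f i (p i):]) * (\<Prod>i\<in>?A - X. (if i = p i then [:0, 1:] else 0))) =
        (if (\<forall>i\<in>?A - X. p i = i) then monom (of_int (sign p) * (\<Prod>i\<in>X. f i (p i))) (n - card X) else 0)"
        unfolding Y_prod[OF finite_Diff[OF finite_atLeastLessThan]] const_prod_poly[OF finX] cd
        by (simp add: of_int_poly monom_altdef mult_to_poly ac_simps)
    qed
    finally show ?thesis .
  qed
  have "(\<Sum>p\<in>?P. signof p * (\<Prod>i\<in>?A. [:f i (p i):] + (if i = p i then [:0, 1:] else 0))) =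
     (\<Sum>p\<in>?P. \<Sum>X\<in>Pow ?A. (if (\<forall>i\<in>?A - X. p i = i) then
        monom (of_int (sign p) * (\<Prod>i\<in>X. f i (p i))) (n - card X) else 0))"
    using step by simp
  also have "\<dots> = (\<Sum>X\<in>Pow ?A. \<Sum>p\<in>?P. (if (\<forall>i\<in>?A - X. p i = i) then
        monom (of_int (sign p) * (\<Prod>i\<in>X. f i (p i))) (n - card X) else 0))"
    by (rule sum.swap)
  also have "\<dots> = (\<Sum>X\<in>Pow ?A. monom (detS f X) (n - card X))"
  proof (rule sum.cong[OF refl])
    fix X assume X: "X \<in> Pow ?A"
    have "(\<Sum>p\<in>?P. (if (\<forall>i\<in>?A - X. p i = i) then
        monom (of_int (sign p) * (\<Prod>i\<in>X. f i (p i))) (n - card X) else 0)) =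
        (\<Sum>p\<in>{p \<in> ?P. (\<forall>i\<in>?A - X. p i = i)}. monom (of_int (sign p) * (\<Prod>i\<in>X. f i (p i))) (n - card X))"
      by (rule sum.inter_filter[OF finP, symmetric])
    also have "{p \<in> ?P. (\<forall>i\<in>?A - X. p i = i)} = {p. p permutes X}"
      using permutes_sub_eq[of X ?A] X by auto
    finally show "(\<Sum>p\<in>?P. (if (\<forall>i\<in>?A - X. p i = i) then
        monom (of_int (sign p) * (\<Prod>i\<in>X. f i (p i))) (n - card X) else 0)) = monom (detS f X) (n - card X)"
      unfolding detS_def monom_sum by simp
  qed
  finally show ?thesis .
qed


definition mmf :: "'a::comm_ring_1 \<Rightarrow> (nat \<Rightarrow> 'a) \<Rightarrow> (nat \<Rightarrow> 'a) \<Rightarrow> nat \<Rightarrow> nat \<Rightarrow> 'a" where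
  "mmf hbar q chi i j = (if i = j then chi i else hbar * rinv (1 - q i * rinv (q j)))"

lemma entry_facts:
  fixes q :: "nat \<Rightarrow> 'a::comm_ring_1"
  assumes hq: "\<And>j. j < n \<Longrightarrow> q j dvd 1"
    and hd: "\<And>i j. i < n \<Longrightarrow> j < n \<Longrightarrow> i \<noteq> j \<Longrightarrow> (1 - q i * rinv (q j)) dvd 1"
    and i: "i < n" and j: "j < n" and ij: "i \<noteq> j"
  shows "(q j - q i) * rinv (q j - q i) = 1 \<and> mmf hbar q chi i j = hbar * q j * rinv (q j - q i)"
proof -
  define d where "d = 1 - q i * rinv (q j)"
  define u where "u = rinv (q j)"
  have qu: "q j * u = 1" unfolding u_def using rinv_unit[OF hq[OF j]] .
  have dd: "d * rinv d = 1" unfolding d_def using rinv_unit[OF hd[OF i j ij]] .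
  have "d * q j = q j - q i * (q j * u)" by (simp add: d_def u_def algebra_simps)
  then have e: "q j - q i = d * q j" using qu by simp
  have "(q j - q i) * (rinv d * u) = (d * rinv d) * (q j * u)" unfolding e by (simp only: ac_simps)
  then have "(q j - q i) * (rinv d * u) = 1" using dd qu by simp
  then have r: "rinv (q j - q i) = rinv d * u" using rinv_eq by blast
  have "hbar * q j * (rinv d * u) = hbar * rinv d * (q j * u)" by (simp only: ac_simps)
  then have "hbar * q j * rinv (q j - q i) = hbar * rinv d" using qu r by simp
  then show ?thesis unfolding mmf_def using ij \<open>(q j - q i) * (rinv d * u) = 1\<close> r
    by (simp add: d_def)
qed

theorem mainTheorem14:
  fixes n k :: nat and hbar :: "'a::comm_ring_1" and q chi :: "nat \<Rightarrow> 'a"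
  assumes "\<And>j. j < n \<Longrightarrow> q j dvd 1"
    and "\<And>i j. i < n \<Longrightarrow> j < n \<Longrightarrow> i \<noteq> j \<Longrightarrow> (1 - q i * rinv (q j)) dvd 1"
    and "1 \<le> k" and "k \<le> n"
  shows "Ecoef n hbar q chi k =
    (\<Sum>K\<in>{K. K \<subseteq> {..<n} \<and> card K = k}. \<Sum>\<pi>\<in>matchings K. Jw chi K \<pi> * Vw hbar q K \<pi>)"
proof -
  define f where "f = mmf hbar q chi"
  have R: "(q j - q i) * rinv (q j - q i) = 1 \<and> f i j = hbar * q j * rinv (q j - q i)"
    if "i < n" "j < n" "i \<noteq> j" for i j
    unfolding f_def by (rule entry_facts[OF assms(1,2) that])
  have M: "Mchi n hbar q chi $$ (i, j) = f i j" if "i < n" "j < n" for i j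
    using that by (simp add: Mchi_def f_def mmf_def)
  have D: "detpoly n hbar q chi = (\<Sum>X\<in>Pow {0..<n}. monom (detS f X) (n - card X))"
  proof -
    have "detpoly n hbar q chi = (\<Sum>p\<in>{p. p permutes {0..<n}}. signof p *
           (\<Prod>i\<in>{0..<n}. [:f i (p i):] + (if i = p i then [:0, 1:] else 0)))"
      unfolding detpoly_def
    proof (subst det_def'[where n=n], simp, intro sum.cong refl arg_cong2[where f="(*)"] prod.cong)
      fix p i assume p: "p \<in> {p. p permutes {0..<n}}" and i: "i \<in> {0..<n}"
      have pi: "p i < n" using permutes_in_image[of p "{0..<n}" i] p i by simp
      show "mat n n (\<lambda>(i, j). (if i = j then [:0, 1:] else 0) + [:Mchi n hbar q chi $$ (i, j):]) $$ (i, p i) =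
          [:f i (p i):] + (if i = p i then [:0, 1:] else 0)"
        using i pi by (simp add: M)
    qed
    also have "\<dots> = (\<Sum>X\<in>Pow {0..<n}. monom (detS f X) (n - card X))" by (rule det_expand)
    finally show ?thesis .
  qed
  have "Ecoef n hbar q chi k = (\<Sum>X\<in>Pow {0..<n}. if n - card X = n - k then detS f X else 0)"
    unfolding Ecoef_def D coeff_sum coeff_monom by simp
  also have "\<dots> = (\<Sum>X\<in>{X \<in> Pow {0..<n}. n - card X = n - k}. detS f X)"
    by (rule sum.inter_filter[symmetric]) simp
  also have "{X \<in> Pow {0..<n}. n - card X = n - k} = {K. K \<subseteq> {..<n} \<and> card K = k}"
  proof -
    have "(n - card X = n - k) = (card X = k)" if X: "X \<subseteq> {..<n}" for X
    proof -
      have "card X \<le> n" using card_mono[of "{..<n}" X] X by simp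
      then show ?thesis using assms(4) by arith
    qed
    then show ?thesis by (auto simp: atLeast0LessThan)
  qed
  also have "(\<Sum>X\<in>{K. K \<subseteq> {..<n} \<and> card K = k}. detS f X) =
    (\<Sum>K\<in>{K. K \<subseteq> {..<n} \<and> card K = k}. \<Sum>\<pi>\<in>matchings K. Jw chi K \<pi> * Vw hbar q K \<pi>)"
  proof (rule sum.cong[OF refl])
    fix K assume "K \<in> {K. K \<subseteq> {..<n} \<and> card K = k}"
    then have K: "K \<subseteq> {..<n}" by simp
    have hc: "\<exists>c g. \<forall>i\<in>{..<n}. \<forall>j\<in>{..<n}. i \<noteq> j \<and> i \<noteq> a \<and> j \<noteq> a \<longrightarrow>
        f i a * f a j = f i j * (c * (g i - g j))" if a: "a \<in> {..<n}" for a
    proof (intro exI[of _ "hbar * q a"] exI[of _ "\<lambda>i. rinv (q a - q i)"] ballI impI)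
      fix i j assume i: "i \<in> {..<n}" and j: "j \<in> {..<n}" and ne: "i \<noteq> j \<and> i \<noteq> a \<and> j \<noteq> a"
      let ?x = "rinv (q a - q i)" and ?y = "rinv (q j - q a)" and ?z = "rinv (q j - q i)"
        and ?w = "rinv (q a - q j)"
      have Ria: "(q a - q i) * ?x = 1 \<and> f i a = hbar * q a * ?x" using R[of i a] i a ne by auto
      have Raj: "(q j - q a) * ?y = 1 \<and> f a j = hbar * q j * ?y" using R[of a j] j a ne by auto
      have Rij: "(q j - q i) * ?z = 1 \<and> f i j = hbar * q j * ?z" using R[of i j] i j ne by auto
      have Rja: "(q a - q j) * ?w = 1" using R[of j a] j a ne by auto
      have e: "?x * ?y = ?z * (?x - ?w)"
        using cyc_id[of "q a" "q i" ?x "q j" ?y ?z ?w] Ria Raj Rij Rja by blast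
      have "(hbar * q a * ?x) * (hbar * q j * ?y) = (hbar * q a) * (hbar * q j) * (?x * ?y)"
        by (simp only: ac_simps)
      also have "\<dots> = (hbar * q a) * (hbar * q j) * (?z * (?x - ?w))" by (simp only: e)
      also have "\<dots> = (hbar * q j * ?z) * ((hbar * q a) * (?x - ?w))" by (simp only: ac_simps)
      finally show "f i a * f a j = f i j * (hbar * q a * (?x - ?w))"
        using Ria Raj Rij by simp
    qed
    have "detS f K = HS f K" by (rule detS_HS[OF finite_lessThan hc K])
    also have "\<dots> = (\<Sum>\<pi>\<in>matchings K. Jw chi K \<pi> * Vw hbar q K \<pi>)"
      unfolding HS_def
    proof (rule sum.cong[OF refl])
      fix \<pi> assume p: "\<pi> \<in> matchings K"
      have pK: "\<And>i. i \<in> K \<Longrightarrow> \<pi> i \<in> K" using p unfolding matchings_def by auto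
      have J: "(\<Prod>i\<in>{i\<in>K. \<pi> i = i}. f i i) = Jw chi K \<pi>"
        unfolding Jw_def f_def mmf_def by simp
      have V: "(\<Prod>i\<in>{i\<in>K. i < \<pi> i}. - (f i (\<pi> i) * f (\<pi> i) i)) = Vw hbar q K \<pi>"
        unfolding Vw_def
      proof (rule prod.cong[OF refl])
        fix i assume "i \<in> {i\<in>K. i < \<pi> i}"
        then have iK: "i \<in> K" and lt: "i < \<pi> i" by auto
        define j where "j = \<pi> i"
        have jK: "j \<in> K" using pK[OF iK] j_def by simp
        have ij: "i \<noteq> j" using lt j_def by simp
        have i: "i < n" and j: "j < n" using iK jK K by auto
        let ?z = "rinv (q j - q i)" and ?w = "rinv (q i - q j)"
        have Rij: "(q j - q i) * ?z = 1 \<and> f i j = hbar * q j * ?z" using R[OF i j ij] .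
        have Rji: "(q i - q j) * ?w = 1 \<and> f j i = hbar * q i * ?w" using R[OF j i] ij by auto
        have pz: "- (?z * ?w) = ?w ^ 2" using pair_id[of "q j" "q i" ?z ?w] Rij Rji by blast
        have rw: "rinv ((q i - q j)^2) = ?w ^ 2"
          by (rule rinv_eq) (use Rji in \<open>simp add: power_mult_distrib[symmetric]\<close>)
        have "- ((hbar * q j * ?z) * (hbar * q i * ?w)) = hbar^2 * q i * q j * (- (?z * ?w))"
          by (simp add: power2_eq_square ac_simps)
        also have "\<dots> = hbar^2 * q i * q j * rinv ((q i - q j)^2)" unfolding pz rw ..
        finally show "- (f i (\<pi> i) * f (\<pi> i) i) = hbar^2 * q i * q (\<pi> i) * rinv ((q i - q (\<pi> i))^2)"
          using Rij Rji unfolding j_def by simp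
      qed
      show "wt f K \<pi> = Jw chi K \<pi> * Vw hbar q K \<pi>" unfolding wt_def J V ..
    qed
    finally show "detS f K = (\<Sum>\<pi>\<in>matchings K. Jw chi K \<pi> * Vw hbar q K \<pi>)" .
  qed
  finally show ?thesis .
qed

end
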